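(* Let $\mathbf z_1,\dots,\mathbf z_d\in\mathbb Z^d$ be a basis of $\mathbb Z^d$ with $|\underline{\mathbf z_1}|\leq|\underline{\mathbf z_2}|\leq|\underline{\mathbf z_3}|$. Then for each $\boldsymbol\alpha\in\mathfrak S_2$ we have $\langle\boldsymbol\alpha,\mathbf z_1\rangle\cdot\langle\boldsymbol\alpha_2,\mathbf z_1\rangle>0$.
   Context: Let $d\geq3$. $|\cdot|$ is the Euclidean norm, $\langle\cdot,\cdot\rangle$ the standard inner product. For $\mathbf x=(x_1,\dots,x_d)\in\mathbb R^d$ write $\underline{\mathbf x}=(x_1,\dots,x_{d-1})$. Let $\pi_d=\{\mathbf x\in\mathbb R^d:x_d=1\}$. For given vectors $\mathbf z_1,\mathbf z_2,\dots$: $\det\underline\Lambda_{k,l}=|\underline{\mathbf z_k}\wedge\dots\wedge\underline{\mathbf z_{k+l-1}}|$; $R_k=1/(2|\underline{\mathbf z_{k+1}}|\det\underline\Lambda_{k,d-1})$; when $\underline{\mathbf z_k},\dots,\underline{\mathbf z_{k+d-2}}$ are linearly independent, $\boldsymbol\alpha_k$ is the unique point of $\pi_d$ orthogonal to $\mathbf z_k,\dots,\mathbf z_{k+d-2}$ and $\mathfrak S_k=\{\mathbf x\in\pi_d:|\mathbf x-\boldsymbol\alpha_k|\le R_k\}$; whenever $\boldsymbol\alpha_k$ or $\mathfrak S_k$ appears it is implicitly assumed well defined. *)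

theory Defs
  imports Complex_Main "Jordan_Normal_Form.Determinant"
begin

text \<open>Vectors of R^m are represented as functions nat => real, coordinates x_1..x_m
  being the values at 1..m. The underline operation (dropping the last coordinate)
  is realised by evaluating inner products/norms in dimension d-1.
  A family z_1, z_2, ... of integer vectors is z :: nat => nat => int, z k i = i-th
  coordinate of z_k.\<close>

definition inner_n :: "nat \<Rightarrow> (nat \<Rightarrow> real) \<Rightarrow> (nat \<Rightarrow> real) \<Rightarrow> real" where
  "inner_n m x y = (\<Sum>i=1..m. x i * y i)"

definition norm_n :: "nat \<Rightarrow> (nat \<Rightarrow> real) \<Rightarrow> real" where
  "norm_n m x = sqrt (inner_n m x x)"

definition rz :: "(nat \<Rightarrow> nat \<Rightarrow> int) \<Rightarrow> nat \<Rightarrow> nat \<Rightarrow> real" where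
  "rz z k = (\<lambda>i. real_of_int (z k i))"

definition wedge_norm :: "nat \<Rightarrow> (nat \<Rightarrow> nat \<Rightarrow> real) \<Rightarrow> nat \<Rightarrow> real" where
  "wedge_norm m u l = sqrt (det (mat l l (\<lambda>(i,j). inner_n m (u i) (u j))))"

definition detLam :: "nat \<Rightarrow> (nat \<Rightarrow> nat \<Rightarrow> int) \<Rightarrow> nat \<Rightarrow> nat \<Rightarrow> real" where
  "detLam d z k l = wedge_norm (d - 1) (\<lambda>i. rz z (k + i)) l"

definition R_rad :: "nat \<Rightarrow> (nat \<Rightarrow> nat \<Rightarrow> int) \<Rightarrow> nat \<Rightarrow> real" where
  "R_rad d z k = 1 / (2 * norm_n (d - 1) (rz z (k + 1)) * detLam d z k (d - 1))"

definition pi_plane :: "nat \<Rightarrow> (nat \<Rightarrow> real) set" where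
  "pi_plane d = {x. x d = 1}"

definition under_indep :: "nat \<Rightarrow> (nat \<Rightarrow> nat \<Rightarrow> int) \<Rightarrow> nat \<Rightarrow> bool" where
  "under_indep d z k \<longleftrightarrow>
     (\<forall>c :: nat \<Rightarrow> real. (\<forall>i\<in>{1..d-1}. (\<Sum>j<d-1. c j * rz z (k + j) i) = 0)
        \<longrightarrow> (\<forall>j<d-1. c j = 0))"

text \<open>alpha_k: the unique point of pi_d orthogonal to z_k, ..., z_(k+d-2)
  (normalised to vanish outside the coordinates 1..d).\<close>
definition alpha_pt :: "nat \<Rightarrow> (nat \<Rightarrow> nat \<Rightarrow> int) \<Rightarrow> nat \<Rightarrow> nat \<Rightarrow> real" where
  "alpha_pt d z k = (THE x. x \<in> pi_plane d \<and> (\<forall>j\<in>{k..k+d-2}. inner_n d x (rz z j) = 0)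
                         \<and> (\<forall>i. i \<notin> {1..d} \<longrightarrow> x i = 0))"

definition S_set :: "nat \<Rightarrow> (nat \<Rightarrow> nat \<Rightarrow> int) \<Rightarrow> nat \<Rightarrow> (nat \<Rightarrow> real) set" where
  "S_set d z k = {x \<in> pi_plane d.
      norm_n d (\<lambda>i. x i - alpha_pt d z k i) \<le> R_rad d z k}"

definition is_Z_basis :: "nat \<Rightarrow> (nat \<Rightarrow> nat \<Rightarrow> int) \<Rightarrow> bool" where
  "is_Z_basis d z \<longleftrightarrow>
     (\<forall>v :: nat \<Rightarrow> int. \<exists>c :: nat \<Rightarrow> int. \<forall>i\<in>{1..d}. v i = (\<Sum>k=1..d. c k * z k i)) \<and>
     (\<forall>c :: nat \<Rightarrow> int. (\<forall>i\<in>{1..d}. (\<Sum>k=1..d. c k * z k i) = 0) \<longrightarrow> (\<forall>k\<in>{1..d}. c k = 0))"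

end

theory Submission
  imports Defs
begin

lemma sum_1n_shift: "(\<Sum>i=1..n. f i) = (\<Sum>k<n. f (Suc k))"
  by (induction n) (auto simp: atLeastAtMostSuc_conv add.commute)

lemma inner_split:
  assumes "d = Suc n"
  shows "inner_n d x y = (\<Sum>k<n. x (Suc k) * y (Suc k)) + x d * y d"
  unfolding inner_n_def assms sum_1n_shift by simp

lemma cs_sum:
  fixes x y :: "nat \<Rightarrow> real"
  assumes "finite S"
  shows "\<bar>\<Sum>i\<in>S. x i * y i\<bar> \<le> sqrt (\<Sum>i\<in>S. x i * x i) * sqrt (\<Sum>i\<in>S. y i * y i)"
proof -
  have "0 \<le> (\<Sum>i\<in>S. \<Sum>j\<in>S. (x i * y j - x j * y i)^2)"
    by (intro sum_nonneg) auto
  also have "\<dots> = (\<Sum>i\<in>S. \<Sum>j\<in>S. (x i * x i) * (y j * y j))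
      + (\<Sum>i\<in>S. \<Sum>j\<in>S. (y i * y i) * (x j * x j))
      - 2 * (\<Sum>i\<in>S. \<Sum>j\<in>S. (x i * y i) * (x j * y j))"
    by (simp add: sum.distrib sum_subtractf sum_distrib_left power2_eq_square algebra_simps)
  also have "\<dots> = 2 * ((\<Sum>i\<in>S. x i * x i) * (\<Sum>i\<in>S. y i * y i)) - 2 * (\<Sum>i\<in>S. x i * y i)^2"
    by (simp add: sum_product[symmetric] power2_eq_square mult.commute) (subst sum.swap, simp add: sum_product)
  finally have "(\<Sum>i\<in>S. x i * y i)^2 \<le> (\<Sum>i\<in>S. x i * x i) * (\<Sum>i\<in>S. y i * y i)"
    by simp
  then have "sqrt ((\<Sum>i\<in>S. x i * y i)^2) \<le> sqrt ((\<Sum>i\<in>S. x i * x i) * (\<Sum>i\<in>S. y i * y i))"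
    using real_sqrt_le_mono by blast
  then show ?thesis by (simp add: real_sqrt_mult)
qed

lemma ifmul: "(a::real) * (if p then 1 else 0) * c = (if p then a * c else 0)" by simp

lemma mat_delete_map:
  assumes "i < dim_row M" "j < dim_col M"
  shows "mat_delete (map_mat f M) i j = map_mat f (mat_delete M i j)"
  using assms by (intro eq_matI) (auto simp: mat_delete_def)

theorem corollary1:
  fixes d :: nat and z :: "nat \<Rightarrow> nat \<Rightarrow> int" and \<alpha> :: "nat \<Rightarrow> real"
  assumes "d \<ge> 3"
    and "is_Z_basis d z"
    and "norm_n (d - 1) (rz z 1) \<le> norm_n (d - 1) (rz z 2)"
    and "norm_n (d - 1) (rz z 2) \<le> norm_n (d - 1) (rz z 3)"
    and "under_indep d z 2"
    and "\<alpha> \<in> S_set d z 2"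
  shows "inner_n d \<alpha> (rz z 1) * inner_n d (alpha_pt d z 2) (rz z 1) > 0"
proof -
  define n where "n = d - 1"
  have dn: "d = Suc n" and n2: "n \<ge> 2" using assms(1) by (auto simp: n_def)
  define Ai :: "int mat" where "Ai = mat n n (\<lambda>(i,k). z (2+i) (Suc k))"
  define A :: "real mat" where "A = map_mat real_of_int Ai"
  define bi :: "int vec" where "bi = vec n (\<lambda>i. z (2+i) d)"
  define b :: "real vec" where "b = map_vec real_of_int bi"
  have Aic: "Ai \<in> carrier_mat n n" by (simp add: Ai_def)
  have Ac: "A \<in> carrier_mat n n" by (simp add: A_def Ai_def)
  have bc: "b \<in> carrier_vec n" by (simp add: b_def bi_def)
  have Aent: "\<And>i k. i < n \<Longrightarrow> k < n \<Longrightarrow> A $$ (i,k) = rz z (2+i) (Suc k)"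
    by (simp add: A_def Ai_def rz_def)
  have bent: "\<And>i. i < n \<Longrightarrow> b $ i = rz z (2+i) d"
    by (simp add: b_def bi_def rz_def)
  have mv: "\<And>v i. v \<in> carrier_vec n \<Longrightarrow> i < n \<Longrightarrow>
      (A *\<^sub>v v) $ i = (\<Sum>k<n. rz z (2+i) (Suc k) * v $ k)"
    using Ac by (auto simp: index_mult_mat_vec scalar_prod_def Aent atLeast0LessThan intro!: sum.cong)
  have detA: "det A \<noteq> 0"
  proof
    assume "det A = 0"
    then have "det (A\<^sup>T) = 0" using det_transpose[OF Ac] by simp
    then obtain v where v: "v \<in> carrier_vec n" "v \<noteq> 0\<^sub>v n" "A\<^sup>T *\<^sub>v v = 0\<^sub>v n"
      using det_0_iff_vec_prod_zero[of "A\<^sup>T" n] Ac by auto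
    define c where "c = (\<lambda>j. v $ j)"
    have "\<forall>i\<in>{1..d-1}. (\<Sum>j<d-1. c j * rz z (2+j) i) = 0"
    proof
      fix i assume "i \<in> {1..d-1}"
      then obtain k where k: "i = Suc k" "k < n" using n_def by (cases i) auto
      have "(A\<^sup>T *\<^sub>v v) $ k = 0" using v(3) k by simp
      moreover have "(A\<^sup>T *\<^sub>v v) $ k = (\<Sum>j<n. rz z (2+j) (Suc k) * v $ j)"
        using k v(1) Ac by (auto simp: index_mult_mat_vec scalar_prod_def Aent atLeast0LessThan intro!: sum.cong)
      ultimately show "(\<Sum>j<d-1. c j * rz z (2+j) i) = 0" using k by (simp add: c_def n_def mult.commute)
    qed
    with assms(5) have "\<forall>j<n. c j = 0" unfolding under_indep_def n_def by auto
    then have "v = 0\<^sub>v n" using v(1) by (auto simp: c_def intro!: eq_vecI)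
    with v(2) show False by simp
  qed
  have adjc: "adj_mat A \<in> carrier_mat n n" using adj_mat(1)[OF Ac] .
  define a where "a = (- 1 / det A) \<cdot>\<^sub>v (adj_mat A *\<^sub>v b)"
  have ac: "a \<in> carrier_vec n" using adjc bc by (simp add: a_def)
  have Aa: "A *\<^sub>v a = - b"
  proof -
    have "A *\<^sub>v a = (- 1 / det A) \<cdot>\<^sub>v (A *\<^sub>v (adj_mat A *\<^sub>v b))"
      unfolding a_def using Ac adjc bc by (simp add: mult_mat_vec)
    also have "A *\<^sub>v (adj_mat A *\<^sub>v b) = (A * adj_mat A) *\<^sub>v b"
      using Ac adjc bc by (simp add: assoc_mult_mat_vec)
    also have "\<dots> = det A \<cdot>\<^sub>v b"
    proof (rule eq_vecI)
      fix i assume i: "i < dim_vec (det A \<cdot>\<^sub>v b)"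
      then have i': "i < n" using bc by simp
      have "((A * adj_mat A) *\<^sub>v b) $ i = (\<Sum>ia\<in>{0..<n}. (if ia = i then det A * b $ ia else 0))"
        using adj_mat(2)[OF Ac] bc i' by (auto simp: index_mult_mat_vec scalar_prod_def ifmul intro!: sum.cong)
      also have "\<dots> = det A * b $ i" using i' by simp
      finally show "((A * adj_mat A) *\<^sub>v b) $ i = (det A \<cdot>\<^sub>v b) $ i" using i' bc by simp
    qed (use adj_mat(2)[OF Ac] bc in simp)
    finally show ?thesis using detA bc by (auto intro!: eq_vecI)
  qed
  have uniq_v: "\<And>v. v \<in> carrier_vec n \<Longrightarrow> A *\<^sub>v v = - b \<Longrightarrow> v = a"
  proof -
    fix v assume v: "v \<in> carrier_vec n" "A *\<^sub>v v = - b"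
    have "A *\<^sub>v (v - a) = 0\<^sub>v n"
      using v Aa Ac ac bc by (simp add: mult_minus_distrib_mat_vec)
    then have "v - a = 0\<^sub>v n"
    proof -
      have "v - a \<in> carrier_vec n" using v ac by simp
      then show ?thesis using det_0_iff_vec_prod_zero[OF Ac] detA \<open>A *\<^sub>v (v - a) = 0\<^sub>v n\<close> by blast
    qed
    note va = this
    show "v = a"
    proof (rule eq_vecI)
      fix i assume i: "i < dim_vec a"
      then have "(v - a) $ i = 0" using va ac by simp
      then show "v $ i = a $ i" using v ac i by simp
    qed (use v ac in simp)
  qed
  have key: "\<And>y j. y d = 1 \<Longrightarrow> j < n \<Longrightarrow>
      inner_n d y (rz z (2+j)) = (A *\<^sub>v vec n (\<lambda>k. y (Suc k))) $ j + b $ j"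
    by (simp add: inner_split[OF dn] mv bent mult.commute)
  define x where "x = (\<lambda>i. if i = d then 1 else if 1 \<le> i \<and> i \<le> n then a $ (i - 1) else (0::real))"
  define P where "P = (\<lambda>y. y \<in> pi_plane d \<and> (\<forall>j\<in>{2..2+d-2}. inner_n d y (rz z j) = 0)
                         \<and> (\<forall>i. i \<notin> {1..d} \<longrightarrow> y i = 0))"
  have xd: "x d = 1" by (simp add: x_def)
  have xv: "vec n (\<lambda>k. x (Suc k)) = a"
    using ac dn by (auto intro!: eq_vecI simp: x_def)
  have Px: "P x"
    unfolding P_def
  proof (intro conjI ballI allI impI)
    show "x \<in> pi_plane d" by (simp add: pi_plane_def xd)
  next
    fix j assume jj: "j \<in> {2..2+d-2}"
    define j' where "j' = j - 2"
    have j': "j = 2 + j'" "j' < n" using jj dn by (auto simp: j'_def)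
    show "inner_n d x (rz z j) = 0"
      using key[of x, OF xd j'(2)] xv Aa bc j' by simp
  next
    fix i assume "i \<notin> {1..d}"
    then show "x i = 0" using dn by (auto simp: x_def)
  qed
  have Puniq: "\<And>y. P y \<Longrightarrow> y = x"
  proof -
    fix y assume Py: "P y"
    then have yd: "y d = 1" by (simp add: P_def pi_plane_def)
    have "A *\<^sub>v vec n (\<lambda>k. y (Suc k)) = - b"
    proof (rule eq_vecI)
      fix j assume "j < dim_vec (- b)"
      then have j: "j < n" using bc by simp
      have "inner_n d y (rz z (2+j)) = 0" using Py j dn unfolding P_def by auto
      then show "(A *\<^sub>v vec n (\<lambda>k. y (Suc k))) $ j = (- b) $ j"
        using key[of y, OF yd j] j bc by simp
    qed (use Ac bc in simp)
    then have yv: "vec n (\<lambda>k. y (Suc k)) = a" by (intro uniq_v) auto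
    show "y = x"
    proof
      fix i
      show "y i = x i"
      proof (cases "i = d")
        case True then show ?thesis using yd xd by simp
      next
        case False
        show ?thesis
        proof (cases "1 \<le> i \<and> i \<le> n")
          case True
          then have "y i = vec n (\<lambda>k. y (Suc k)) $ (i - 1)" by (cases i) auto
          then show ?thesis using yv True False by (simp add: x_def)
        next
          case F2: False
          then have "i \<notin> {1..d}" using False dn by auto
          then have "y i = 0" using Py by (simp add: P_def)
          moreover have "x i = 0" using F2 False by (auto simp: x_def)
          ultimately show ?thesis by simp
        qed
      qed
    qed
  qed
  have alpha_eq: "alpha_pt d z 2 = x"
    unfolding alpha_pt_def using Px Puniq unfolding P_def by (rule the_equality)
  define c where "c = inner_n d x (rz z 1)"
  have orth: "\<And>j. j \<in> {2..d} \<Longrightarrow> inner_n d x (rz z j) = 0"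
    using Px dn unfolding P_def by auto
  have c_nz: "c \<noteq> 0"
  proof
    assume c0: "c = 0"
    obtain cc :: "nat \<Rightarrow> int" where cc: "\<forall>i\<in>{1..d}. (\<lambda>i. if i = d then 1 else 0) i = (\<Sum>k=1..d. cc k * z k i)"
    proof -
      have "\<forall>v :: nat \<Rightarrow> int. \<exists>c :: nat \<Rightarrow> int. \<forall>i\<in>{1..d}. v i = (\<Sum>k=1..d. c k * z k i)"
        using assms(2) unfolding is_Z_basis_def by blast
      from spec[OF this, of "\<lambda>i. if i = d then 1 else 0"] show ?thesis using that by blast
    qed
    have "(1::real) = (\<Sum>i\<in>{1..d}. if i = d then x i else 0)" using xd dn by simp
    also have "\<dots> = (\<Sum>i\<in>{1..d}. x i * real_of_int (\<Sum>k=1..d. cc k * z k i))"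
    proof (intro sum.cong refl)
      fix i assume i: "i \<in> {1..d}"
      have "(\<Sum>k=1..d. cc k * z k i) = (if i = d then 1 else 0)" using cc i by auto
      then show "(if i = d then x i else 0) = x i * real_of_int (\<Sum>k=1..d. cc k * z k i)" by simp
    qed
    also have "\<dots> = (\<Sum>i\<in>{1..d}. \<Sum>k=1..d. real_of_int (cc k) * (x i * rz z k i))"
      by (simp add: sum_distrib_left rz_def algebra_simps)
    also have "\<dots> = (\<Sum>k=1..d. real_of_int (cc k) * inner_n d x (rz z k))"
      by (subst sum.swap) (simp add: inner_n_def sum_distrib_left)
    also have "\<dots> = 0"
    proof (intro sum.neutral ballI)
      fix k assume "k \<in> {1..d}"
      then have "k = 1 \<or> k \<in> {2..d}" by auto
      then show "real_of_int (cc k) * inner_n d x (rz z k) = 0"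
        using orth c0 by (auto simp: c_def)
    qed
    finally show False by simp
  qed
  have int_det: "det A \<in> \<int>"
    unfolding A_def of_int_hom.hom_det by simp
  have int_adj: "\<And>i j. i < n \<Longrightarrow> j < n \<Longrightarrow> adj_mat A $$ (i,j) \<in> \<int>"
  proof -
    fix i j assume ij: "i < n" "j < n"
    have "adj_mat A $$ (i,j) = (-1)^(j+i) * det (mat_delete A j i)"
      using ij Ac by (simp add: adj_mat_def cofactor_def)
    also have "mat_delete A j i = map_mat real_of_int (mat_delete Ai j i)"
      unfolding A_def using ij Aic by (intro mat_delete_map) auto
    finally show "adj_mat A $$ (i,j) \<in> \<int>"
      by (simp add: of_int_hom.hom_det)
  qed
  have int_a: "\<And>k. k < n \<Longrightarrow> det A * a $ k \<in> \<int>"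
  proof -
    fix k assume k: "k < n"
    have "det A * a $ k = - (\<Sum>j<n. adj_mat A $$ (k,j) * b $ j)"
      using k adjc bc detA by (simp add: a_def index_mult_mat_vec scalar_prod_def atLeast0LessThan)
    also have "\<dots> \<in> \<int>"
      using int_adj k bent by (intro Ints_minus Ints_sum Ints_mult) (auto simp: rz_def)
    finally show "det A * a $ k \<in> \<int>" .
  qed
  have c_expand: "c = (\<Sum>k<n. a $ k * rz z 1 (Suc k)) + rz z 1 d"
  proof -
    have xs: "\<And>k. k < n \<Longrightarrow> x (Suc k) = a $ k" using dn by (simp add: x_def)
    have "(\<Sum>k<n. x (Suc k) * rz z 1 (Suc k)) = (\<Sum>k<n. a $ k * rz z 1 (Suc k))"
      by (rule sum.cong) (auto simp: xs)
    then show ?thesis unfolding c_def inner_split[OF dn] using xd by simp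
  qed
  have int_c: "det A * c \<in> \<int>"
  proof -
    have "det A * c = (\<Sum>k<n. (det A * a $ k) * rz z 1 (Suc k)) + det A * rz z 1 d"
      by (simp add: c_expand distrib_left sum_distrib_left mult.assoc)
    also have "\<dots> \<in> \<int>"
      by (intro Ints_add Ints_sum int_a int_det Ints_mult) (auto simp: rz_def)
    finally show ?thesis .
  qed
  have dc1: "\<bar>det A\<bar> * \<bar>c\<bar> \<ge> 1"
  proof -
    obtain m where m: "det A * c = of_int m" using int_c by (auto elim: Ints_cases)
    have "m \<noteq> 0" using m detA c_nz by auto
    then have "\<bar>real_of_int m\<bar> \<ge> 1" by linarith
    moreover have "\<bar>det A\<bar> * \<bar>c\<bar> = \<bar>det A * c\<bar>" by (simp add: abs_mult)
    ultimately show ?thesis using m by simp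
  qed
  have gram: "mat n n (\<lambda>(i,j). inner_n n (rz z (2+i)) (rz z (2+j))) = A * A\<^sup>T"
  proof (rule eq_matI)
    fix i j assume ij: "i < dim_row (A * A\<^sup>T)" "j < dim_col (A * A\<^sup>T)"
    then have i: "i < n" and j: "j < n" using Ac by auto
    have "(A * A\<^sup>T) $$ (i,j) = (\<Sum>k<n. A $$ (i,k) * A $$ (j,k))"
      using i j Ac by (auto simp: scalar_prod_def atLeast0LessThan intro!: sum.cong)
    also have "\<dots> = (\<Sum>k<n. rz z (2+i) (Suc k) * rz z (2+j) (Suc k))"
      using i j by (auto simp: Aent intro!: sum.cong)
    also have "\<dots> = inner_n n (rz z (2+i)) (rz z (2+j))"
      unfolding inner_n_def sum_1n_shift ..
    finally show "mat n n (\<lambda>(i,j). inner_n n (rz z (2+i)) (rz z (2+j))) $$ (i,j) = (A * A\<^sup>T) $$ (i,j)"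
      using i j by simp
  qed (use Ac in auto)
  have Dval: "detLam d z 2 (d-1) = \<bar>det A\<bar>"
  proof -
    have dd: "det (A * A\<^sup>T) = det A * det A"
      using det_mult[OF Ac, of "A\<^sup>T"] det_transpose[OF Ac] Ac by simp
    have "detLam d z 2 (d-1) = sqrt (det (mat n n (\<lambda>(i,j). inner_n n (rz z (2+i)) (rz z (2+j)))))"
      unfolding detLam_def wedge_norm_def n_def by simp
    also have "\<dots> = sqrt (det A * det A)" unfolding gram dd ..
    also have "\<dots> = \<bar>det A\<bar>" by (rule real_sqrt_abs2)
    finally show ?thesis .
  qed
  have Dpos: "\<bar>det A\<bar> > 0" using detA by simp
  define N1 where "N1 = norm_n n (rz z 1)"
  define N3 where "N3 = norm_n n (rz z 3)"
  define R where "R = R_rad d z 2"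
  have N13: "N1 \<le> N3" using assms(3,4) unfolding N1_def N3_def n_def by linarith
  have N1nn: "N1 \<ge> 0" unfolding N1_def norm_n_def inner_n_def
    by (intro real_sqrt_ge_zero sum_nonneg) auto
  have Rdef: "R = 1 / (2 * N3 * \<bar>det A\<bar>)"
    unfolding R_def R_rad_def N3_def Dval n_def by simp
  have Rnn: "R \<ge> 0" unfolding Rdef using N1nn N13 by simp
  have RN: "R * N1 \<le> \<bar>c\<bar> / 2"
  proof (cases "N3 = 0")
    case True then show ?thesis by (simp add: Rdef)
  next
    case False
    then have N3p: "N3 > 0" using N1nn N13 by linarith
    have "R * N1 \<le> R * N3" using Rnn N13 by (simp add: mult_left_mono)
    also have "\<dots> = 1 / (2 * \<bar>det A\<bar>)" using N3p by (simp add: Rdef)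
    also have "\<dots> \<le> \<bar>c\<bar> / 2" proof -
      have "1 / \<bar>det A\<bar> \<le> \<bar>c\<bar>" using dc1 Dpos by (simp add: divide_le_eq mult.commute)
      moreover have "1 / (2 * \<bar>det A\<bar>) = (1 / \<bar>det A\<bar>) / 2" by simp
      ultimately show ?thesis by linarith
    qed
    finally show ?thesis .
  qed
  define \<delta> where "\<delta> = (\<lambda>i. \<alpha> i - x i)"
  have \<alpha>d: "\<alpha> d = 1" using assms(6) by (simp add: S_set_def pi_plane_def)
  have \<delta>d: "\<delta> d = 0" using \<alpha>d xd by (simp add: \<delta>_def)
  have \<delta>R: "norm_n d \<delta> \<le> R"
    using assms(6) alpha_eq by (simp add: S_set_def \<delta>_def R_def)
  define e where "e = (\<Sum>k<n. \<delta> (Suc k) * rz z 1 (Suc k))"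
  have split\<alpha>: "inner_n d \<alpha> (rz z 1) = c + e"
  proof -
    have "inner_n d \<alpha> (rz z 1) = inner_n d x (rz z 1) + inner_n d \<delta> (rz z 1)"
      unfolding inner_n_def \<delta>_def by (simp add: sum.distrib[symmetric] algebra_simps)
    then show ?thesis unfolding c_def e_def inner_split[OF dn, of \<delta>] using \<delta>d by simp
  qed
  have "\<bar>e\<bar> \<le> sqrt (\<Sum>k<n. \<delta> (Suc k) * \<delta> (Suc k)) * sqrt (\<Sum>k<n. rz z 1 (Suc k) * rz z 1 (Suc k))"
    unfolding e_def by (rule cs_sum) simp
  also have "sqrt (\<Sum>k<n. \<delta> (Suc k) * \<delta> (Suc k)) = norm_n d \<delta>"
    unfolding norm_n_def inner_split[OF dn] using \<delta>d by simp
  also have "sqrt (\<Sum>k<n. rz z 1 (Suc k) * rz z 1 (Suc k)) = N1"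
    unfolding N1_def norm_n_def inner_n_def sum_1n_shift ..
  also have "norm_n d \<delta> * N1 \<le> R * N1" using \<delta>R N1nn by (simp add: mult_right_mono)
  finally have eb: "\<bar>e\<bar> \<le> \<bar>c\<bar> / 2" using RN by linarith
  have "c * c > 0" using c_nz not_real_square_gt_zero by blast
  moreover have "\<bar>e * c\<bar> \<le> \<bar>c\<bar> / 2 * \<bar>c\<bar>" using mult_right_mono[OF eb abs_ge_zero[of c]] by (simp add: abs_mult)
  moreover have "\<bar>c\<bar> * \<bar>c\<bar> = c * c" by (simp add: abs_mult_self_eq)
  moreover have "\<bar>c\<bar> / 2 * \<bar>c\<bar> = (\<bar>c\<bar> * \<bar>c\<bar>) / 2" by simp
  moreover have "(c + e) * c = c * c + e * c" by (simp add: algebra_simps)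
  moreover have "- \<bar>e * c\<bar> \<le> e * c" by simp
  ultimately have "(c + e) * c > 0" by linarith
  then show ?thesis using split\<alpha> alpha_eq c_def by simp
qed

end
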